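(* Let $X^{2n}$ be a quasitoric manifold, $T^{n-1}\subset T^n$ a subtorus, $1\leqslant j\leqslant n-1$, and $x$ a fixed point of the $T^n$-action. Then the tangent weights of the restricted $T^{n-1}$-action at $x$ fail to be in $j$-general position (i.e. some $j$ of the $n$ weights $\alpha_{x,1},\ldots,\alpha_{x,n}\in\mathrm{Hom}(T^{n-1},T^1)$ are linearly dependent) if and only if some $n-j$ of the characteristic values at $x$ lie in $\Pi$.
   Context: A quasitoric manifold $X^{2n}$ carries a locally standard $T^n$-action with orbit space a simple $n$-polytope $P^n$; for each facet $F$ of $P^n$, $\lambda(F)\in N=\mathrm{Hom}(T^1,T^n)\cong\mathbb{Z}^n$ is the primitive vector of the circle subgroup stabilizing points over the interior of $F$. Fixed points correspond to vertices; the characteristic values at $x$ are the $n$ vectors $\lambda(F)$ for the facets containing the corresponding vertex. For a subtorus $T^{n-1}\subset T^n$, $\Pi\subset N$ is the image of $\mathrm{Hom}(T^1,T^{n-1})$, i.e. the kernel of $N\to\mathrm{Hom}(T^1,T^n/T^{n-1})\cong\mathbb{Z}$. The tangent weights of the $T^{n-1}$-action at $x$ are the restrictions to $T^{n-1}$ of the $n$ weights of the tangent $T^n$-representation at $x$; linear independence is over $\mathbb{Q}$. *)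

theory Defs
  imports "HOL-Analysis.Analysis"
begin

text \<open>Lattices N = Hom(T^1,T^n) and M = Hom(T^n,T^1) are both modelled as int^'n,
  with CARD('n) = n, and the natural pairing M x N -> Z is the coordinate pairing.\<close>

definition lpair :: "int^'n \<Rightarrow> int^'n \<Rightarrow> int" where
  "lpair a v = (\<Sum>i\<in>UNIV. a $ i * v $ i)"

text \<open>The sublattice Pi of N corresponding to the subtorus T^{n-1}: kernel of the
  (surjective) homomorphism N -> Hom(T^1, T^n/T^{n-1}) = Z given by u.\<close>
definition Pi_lat :: "int^'n \<Rightarrow> (int^'n) set" where
  "Pi_lat u = {v. lpair u v = 0}"

text \<open>A family of weights (indexed by S), restricted to the sublattice P, is linearly
  dependent over Q: a nontrivial rational combination vanishes on all of P.\<close>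
definition restr_dependent :: "(int^'n) set \<Rightarrow> ('n \<Rightarrow> int^'n) \<Rightarrow> 'n set \<Rightarrow> bool" where
  "restr_dependent P alpha S \<longleftrightarrow>
     (\<exists>c :: 'n \<Rightarrow> rat. (\<exists>i\<in>S. c i \<noteq> 0) \<and>
        (\<forall>v\<in>P. (\<Sum>i\<in>S. c i * of_int (lpair (alpha i) v)) = 0))"

definition j_general_position :: "nat \<Rightarrow> (int^'n) set \<Rightarrow> ('n \<Rightarrow> int^'n) \<Rightarrow> bool" where
  "j_general_position j P alpha \<longleftrightarrow> (\<forall>S. card S = j \<longrightarrow> \<not> restr_dependent P alpha S)"

end

theory Submission imports Defs begin

lemma swap3: "(\<Sum>k\<in>A. \<Sum>m\<in>B. \<Sum>m'\<in>C. f k m m') = (\<Sum>m\<in>B. \<Sum>m'\<in>C. \<Sum>k\<in>A. f k m m')"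
  apply (rule trans[OF sum.swap[of "\<lambda>k m. \<Sum>m'\<in>C. f k m m'" B A]])
  apply (rule sum.cong[OF refl])
  apply (rule sum.swap)
  done

lemma key:
  fixes lam alpha :: "'n::finite \<Rightarrow> int^'n" and eps :: "'n \<Rightarrow> int"
  assumes dual: "\<And>i k. lpair (alpha i) (lam k) = (if i = k then eps i else 0)"
    and sign: "\<And>i. eps i = 1 \<or> eps i = -1"
  shows "lpair a v = (\<Sum>k\<in>UNIV. eps k * lpair a (lam k) * lpair (alpha k) v)"
proof -
  define B :: "rat^'n^'n" where "B = (\<chi> k m. of_int (eps k * alpha k $ m))"
  define L :: "rat^'n^'n" where "L = (\<chi> m k. of_int (lam k $ m))"
  have e2: "eps k * eps k = 1" for k using sign[of k] by auto
  have "B ** L = mat 1"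
  proof -
    have "(B ** L) $ k $ k' = (if k = k' then 1 else 0)" for k k'
    proof -
      have "(B ** L) $ k $ k' = (\<Sum>m\<in>UNIV. of_int (eps k * alpha k $ m) * of_int (lam k' $ m))"
        by (simp add: matrix_matrix_mult_def B_def L_def)
      also have "\<dots> = of_int (eps k * lpair (alpha k) (lam k'))"
        by (simp add: lpair_def sum_distrib_left mult.assoc)
      also have "\<dots> = (if k = k' then 1 else 0)" using dual e2 by (simp flip: of_int_mult)
      finally show ?thesis .
    qed
    then show ?thesis by (simp add: vec_eq_iff mat_def)
  qed
  then have LB: "L ** B = mat 1" using matrix_left_right_inverse by blast
  have d: "(\<Sum>k\<in>UNIV. of_int (lam k $ m) * (of_int (eps k) * of_int (alpha k $ m'))) = (if m = m' then 1 else (0::rat))" for m m'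
  proof -
    have "(L ** B) $ m $ m' = (\<Sum>k\<in>UNIV. of_int (lam k $ m) * of_int (eps k * alpha k $ m'))"
      by (simp add: matrix_matrix_mult_def B_def L_def)
    then show ?thesis using LB by (simp add: mat_def)
  qed
  have "(of_int (\<Sum>k\<in>UNIV. eps k * lpair a (lam k) * lpair (alpha k) v) :: rat)
     = (\<Sum>k\<in>UNIV. \<Sum>m\<in>UNIV. \<Sum>m'\<in>UNIV. of_int (a $ m) * of_int (v $ m') * (of_int (lam k $ m) * of_int (eps k * alpha k $ m')))"
    by (simp add: lpair_def sum_distrib_left sum_distrib_right algebra_simps)
  also have "\<dots> = (\<Sum>m\<in>UNIV. \<Sum>m'\<in>UNIV. of_int (a $ m) * of_int (v $ m') * (\<Sum>k\<in>UNIV. of_int (lam k $ m) * of_int (eps k * alpha k $ m')))"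
    by (subst swap3) (simp add: sum_distrib_left)
  also have "\<dots> = (\<Sum>m\<in>UNIV. of_int (a $ m) * of_int (v $ m))"
    by (simp add: d if_distrib sum.delta cong: if_cong)
  also have "\<dots> = of_int (lpair a v)" by (simp add: lpair_def)
  finally show ?thesis by (metis of_int_eq_iff)
qed

theorem lemma4p5:
  fixes lam :: "'n::finite \<Rightarrow> int^'n"
    and alpha :: "'n \<Rightarrow> int^'n"
    and eps :: "'n \<Rightarrow> int"
    and u :: "int^'n"
    and j :: nat
  assumes dual: "\<And>i k. lpair (alpha i) (lam k) = (if i = k then eps i else 0)"
    and sign: "\<And>i. eps i = 1 \<or> eps i = -1"
    and surj: "\<exists>v. lpair u v = 1"
    and j1: "1 \<le> j" and j2: "j \<le> CARD('n) - 1"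
  shows "\<not> j_general_position j (Pi_lat u) alpha \<longleftrightarrow>
         (\<exists>S. card S = CARD('n) - j \<and> (\<forall>i\<in>S. lam i \<in> Pi_lat u))"
proof
  assume "\<not> j_general_position j (Pi_lat u) alpha"
  then obtain S where cS: "card S = j" and dep: "restr_dependent (Pi_lat u) alpha S"
    unfolding j_general_position_def by blast
  then obtain c :: "'n \<Rightarrow> rat" and m where mS: "m \<in> S" and cm: "c m \<noteq> 0"
    and cv: "\<And>v. v \<in> Pi_lat u \<Longrightarrow> (\<Sum>i\<in>S. c i * of_int (lpair (alpha i) v)) = 0"
    unfolding restr_dependent_def by blast
  have lin: "lpair a (x *s p + y *s q) = x * lpair a p + y * lpair a q" for a p q x y
    by (simp add: lpair_def sum_distrib_left sum.distrib algebra_simps)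
  have "lam k \<in> Pi_lat u" if kS: "k \<notin> S" for k
  proof (rule ccontr)
    assume nk: "lam k \<notin> Pi_lat u"
    define v where "v = lpair u (lam m) *s lam k + (- lpair u (lam k)) *s lam m"
    have "v \<in> Pi_lat u" unfolding Pi_lat_def v_def mem_Collect_eq lin by simp
    then have "(\<Sum>i\<in>S. c i * of_int (lpair (alpha i) v)) = 0" by (rule cv)
    moreover have "(\<Sum>i\<in>S. c i * of_int (lpair (alpha i) v)) = (\<Sum>i\<in>S. if i = m then c m * of_int (- lpair u (lam k) * eps m) else 0)"
      apply (rule sum.cong[OF refl])
      using kS unfolding v_def lin dual by auto
    moreover have "c m * of_int (- lpair u (lam k) * eps m) \<noteq> 0"
      using cm nk sign[of m] by (auto simp: Pi_lat_def)
    ultimately show False using mS by simp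
  qed
  moreover have "card (- S) = CARD('n) - j"
    unfolding Compl_eq_Diff_UNIV using cS card_Diff_subset[of S UNIV] by simp
  ultimately show "\<exists>S. card S = CARD('n) - j \<and> (\<forall>i\<in>S. lam i \<in> Pi_lat u)" by blast
next
  assume "\<exists>S. card S = CARD('n) - j \<and> (\<forall>i\<in>S. lam i \<in> Pi_lat u)"
  then obtain S0 where c0: "card S0 = CARD('n) - j" and l0: "\<And>i. i \<in> S0 \<Longrightarrow> lam i \<in> Pi_lat u" by blast
  define S where "S = - S0"
  have "card S = CARD('n) - card S0"
    unfolding S_def Compl_eq_Diff_UNIV using card_Diff_subset[of S0 UNIV] by simp
  then have cS: "card S = j" using c0 j2 by linarith
  define c :: "'n \<Rightarrow> rat" where "c i = of_int (eps i * lpair u (lam i))" for i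
  have c0z: "c i = 0" if "i \<notin> S" for i using that l0[of i] by (auto simp: S_def c_def Pi_lat_def)
  have sumeq: "(\<Sum>i\<in>S. c i * of_int (lpair (alpha i) v)) = of_int (lpair u v)" for v
  proof -
    have "(\<Sum>i\<in>S. c i * of_int (lpair (alpha i) v)) = (\<Sum>i\<in>UNIV. c i * of_int (lpair (alpha i) v))"
      by (rule sum.mono_neutral_left) (auto simp: c0z)
    also have "\<dots> = of_int (\<Sum>k\<in>UNIV. eps k * lpair u (lam k) * lpair (alpha k) v)"
      by (simp add: c_def)
    also have "\<dots> = of_int (lpair u v)" using key[OF dual sign, of u v] by (rule arg_cong[of _ _ of_int, OF sym])
    finally show ?thesis .
  qed
  have "\<exists>i\<in>S. c i \<noteq> 0"
  proof (rule ccontr)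
    assume "\<not> (\<exists>i\<in>S. c i \<noteq> 0)"
    then have "lpair u v = 0" for v using sumeq[of v] by simp
    with surj show False by simp
  qed
  then have "restr_dependent (Pi_lat u) alpha S"
    unfolding restr_dependent_def using sumeq by (auto simp: Pi_lat_def)
  with cS show "\<not> j_general_position j (Pi_lat u) alpha"
    unfolding j_general_position_def by blast
qed

end
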